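(* For every $n\in\mathbb{Z}$ and $x\in\mathbb{R}$, $$E_{n+1}^k(x)=e^{x}\,E_{-n}^k(-x).$$
   Context: Fix $k\ge 0$. Partial order on $\mathbb{Z}$: $j\triangleleft n$ iff either ($|j|<|n|$ and $|n|-|j|$ is a positive even integer) or ($|j|=|n|$ and $n<j$). Let $\delta_k(x)=|2\sin x|^{2k}$ and $(f,g)_k=\frac{1}{2\pi}\int_0^{2\pi} f(x)\overline{g(x)}\delta_k(x)\,dx$. The non-symmetric Heckman–Opdam polynomials $E_n^k$, $n\in\mathbb{Z}$, are the functions on $\mathbb{R}$ of the form $E_n^k(x)=e^{nx}+\sum_{j\triangleleft n}c_{n,j}e^{jx}$ (finite sum) such that $(E_n^k(i\,\cdot),e^{ij\,\cdot})_k=0$ for all $j\triangleleft n$. It is known that they are eigenfunctions of the Cherednik operator $T^k f(x)=f'(x)+2k\frac{f(x)-f(-x)}{1-e^{-2x}}-kf(x)$: $T^kE_n^k=\tilde n E_n^k$, where $\tilde n=n+k$ if $n\ge0$ and $\tilde n=n-k$ if $n<0$. *)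

theory Defs
  imports "HOL-Analysis.Analysis"
begin

definition tri_less :: "int \<Rightarrow> int \<Rightarrow> bool" where
  "tri_less j n \<longleftrightarrow>
     (\<bar>j\<bar> < \<bar>n\<bar> \<and> even (\<bar>n\<bar> - \<bar>j\<bar>)) \<or> (\<bar>j\<bar> = \<bar>n\<bar> \<and> n < j)"

definition supp_set :: "int \<Rightarrow> int set" where
  "supp_set n = insert n {j. tri_less j n}"

text \<open>Weight |2 sin x|^(2k) (with the convention 0^0 = 1).\<close>
definition delta :: "real \<Rightarrow> real \<Rightarrow> real" where
  "delta k x = (if k = 0 then 1 else \<bar>2 * sin x\<bar> powr (2 * k))"

definition ip :: "real \<Rightarrow> (real \<Rightarrow> complex) \<Rightarrow> (real \<Rightarrow> complex) \<Rightarrow> complex" where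
  "ip k f g = (1 / (2 * pi)) *
     integral {0..2*pi} (\<lambda>x. f x * cnj (g x) * complex_of_real (delta k x))"

text \<open>c is the coefficient vector of the non-symmetric Heckman--Opdam polynomial E_n^k:
  E(x) = sum_m c m * e^(m x), leading coefficient 1, other coefficients supported on
  predecessors of n, and E(i .) orthogonal to e^(i j .) for all predecessors j.\<close>
definition HO_coeffs :: "real \<Rightarrow> int \<Rightarrow> (int \<Rightarrow> complex) \<Rightarrow> bool" where
  "HO_coeffs k n c \<longleftrightarrow>
     c n = 1 \<and> (\<forall>j. j \<notin> supp_set n \<longrightarrow> c j = 0) \<and>
     (\<forall>j. tri_less j n \<longrightarrow>
        ip k (\<lambda>x. \<Sum>m\<in>supp_set n. c m * exp (\<i> * of_int m * of_real x))
             (\<lambda>x. exp (\<i> * of_int j * of_real x)) = 0)"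

definition HO_E :: "real \<Rightarrow> int \<Rightarrow> real \<Rightarrow> complex" where
  "HO_E k n x = (\<Sum>m\<in>supp_set n. (THE c. HO_coeffs k n c) m * exp (of_int m * of_real x))"

end

theory Submission
  imports Defs "HOL-Library.Function_Algebras"
begin


lemma cont_delta: "k \<ge> 0 \<Longrightarrow> continuous_on S (delta k)"
proof -
  assume k: "k \<ge> 0"
  show ?thesis
  proof (cases "k = 0")
    case True then show ?thesis unfolding delta_def by simp
  next
    case False
    then have "continuous_on S (\<lambda>x. \<bar>2 * sin x\<bar> powr (2 * k))"
      using k by (intro continuous_on_powr' continuous_intros) auto
    then show ?thesis using False unfolding delta_def by simp
  qed
qed

lemma delta_nonneg: "delta k x \<ge> 0"
  unfolding delta_def by auto

lemma delta_pos: "sin x \<noteq> 0 \<Longrightarrow> delta k x > 0"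
  unfolding delta_def by auto

lemma delta_refl: "delta k (2*pi - x) = delta k x"
  unfolding delta_def by (simp add: sin_diff)

lemma ip_integrable:
  assumes "k \<ge> 0" "continuous_on {0..2*pi} f" "continuous_on {0..2*pi} g"
  shows "(\<lambda>x. f x * cnj (g x) * complex_of_real (delta k x)) integrable_on {0..2*pi}"
  by (intro integrable_continuous_interval continuous_intros assms cont_delta
      continuous_on_cnj)

lemma ip_sum_left:
  assumes "k \<ge> 0" "finite S" "\<And>m. m \<in> S \<Longrightarrow> continuous_on {0..2*pi} (f m)"
    "continuous_on {0..2*pi} g"
  shows "ip k (\<lambda>x. \<Sum>m\<in>S. c m * f m x) g = (\<Sum>m\<in>S. c m * ip k (f m) g)"
proof -
  have "integral {0..2*pi} (\<lambda>x. (\<Sum>m\<in>S. c m * f m x) * cnj (g x) * complex_of_real (delta k x))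
     = integral {0..2*pi} (\<lambda>x. \<Sum>m\<in>S. c m * (f m x * cnj (g x) * complex_of_real (delta k x)))"
    by (simp add: sum_distrib_right mult.assoc)
  also have "\<dots> = (\<Sum>m\<in>S. integral {0..2*pi} (\<lambda>x. c m * (f m x * cnj (g x) * complex_of_real (delta k x))))"
    using assms by (intro integral_sum integrable_continuous_interval continuous_intros cont_delta) auto
  also have "\<dots> = (\<Sum>m\<in>S. c m * integral {0..2*pi} (\<lambda>x. f m x * cnj (g x) * complex_of_real (delta k x)))"
    by simp
  finally show ?thesis unfolding ip_def by (simp add: sum_distrib_left mult.left_commute)
qed

lemma ip_sum_right:
  assumes "k \<ge> 0" "finite S" "\<And>m. m \<in> S \<Longrightarrow> continuous_on {0..2*pi} (g m)"
    "continuous_on {0..2*pi} f"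
  shows "ip k f (\<lambda>x. \<Sum>m\<in>S. c m * g m x) = (\<Sum>m\<in>S. cnj (c m) * ip k f (g m))"
proof -
  have "integral {0..2*pi} (\<lambda>x. f x * cnj (\<Sum>m\<in>S. c m * g m x) * complex_of_real (delta k x))
     = integral {0..2*pi} (\<lambda>x. \<Sum>m\<in>S. cnj (c m) * (f x * cnj (g m x) * complex_of_real (delta k x)))"
    by (simp add: sum_distrib_right sum_distrib_left mult_ac)
  also have "\<dots> = (\<Sum>m\<in>S. integral {0..2*pi} (\<lambda>x. cnj (c m) * (f x * cnj (g m x) * complex_of_real (delta k x))))"
    using assms by (intro integral_sum integrable_continuous_interval continuous_intros cont_delta) auto
  also have "\<dots> = (\<Sum>m\<in>S. cnj (c m) * integral {0..2*pi} (\<lambda>x. f x * cnj (g m x) * complex_of_real (delta k x)))"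
    by simp
  finally show ?thesis unfolding ip_def by (simp add: sum_distrib_left mult.left_commute)
qed

lemma integral_refl2pi:
  "integral {0..2*pi} (\<lambda>x. f (2*pi - x)) = integral {0..2*pi} (f::real \<Rightarrow> complex)"
proof -
  define g where "g = f \<circ> (+) (2*pi)"
  have 1: "integral {-0..-(-(2*pi))} (\<lambda>x. g (-x)) = integral {-(2*pi)..0} g"
    by (rule Henstock_Kurzweil_Integration.integral_reflect_real)
  have 2: "integral {-(2*pi)..0} g = integral {-(2*pi)+2*pi..0+2*pi} f"
    unfolding g_def by (rule integral_shift_Icc_real)
  have 3: "(\<lambda>x. g (-x)) = (\<lambda>x. f (2*pi - x))" by (simp add: g_def o_def)
  show ?thesis using 1 2 unfolding 3 by simp
qed

lemma int_exp:
  "integral {0..2*pi} (\<lambda>x. exp (\<i> * of_int l * of_real x)) = (if l = 0 then 2*pi else 0)"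
proof (cases "l = 0")
  case True then show ?thesis by (simp add: scaleR_conv_of_real)
next
  case False
  have "((\<lambda>x. exp (\<i> * of_int l * of_real x)) has_integral
        (exp (\<i> * of_int l * of_real (2*pi)) / (\<i> * of_int l) - exp (\<i> * of_int l * of_real 0) / (\<i> * of_int l))) {0..2*pi}"
  proof (rule fundamental_theorem_of_calculus)
    fix x :: real
    have "((\<lambda>z. exp (\<i> * of_int l * z) / (\<i> * of_int l)) has_field_derivative
            exp (\<i> * of_int l * of_real x)) (at (of_real x))"
      using False by (auto intro!: derivative_eq_intros)
    then show "((\<lambda>x. exp (\<i> * of_int l * of_real x) / (\<i> * of_int l)) has_vector_derivative
            exp (\<i> * of_int l * of_real x)) (at x within {0..2*pi})"
      by (rule has_vector_derivative_real_field)
  qed simp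
  moreover have "exp (\<i> * of_int l * of_real (2*pi)) = 1"
    using exp_integer_2pi[of "of_int l"] by (simp add: mult_ac)
  ultimately show ?thesis using False by (simp add: integral_unique)
qed



lemma sin_zero_in: "0 \<le> x \<Longrightarrow> x \<le> 2*pi \<Longrightarrow> sin x = 0 \<Longrightarrow> x \<in> {0, pi, 2*pi}"
proof -
  assume a: "0 \<le> x" "x \<le> 2*pi" "sin x = 0"
  then obtain i :: int where i: "x = of_int i * pi" using sin_zero_iff_int2 by blast
  with a have "0 \<le> of_int i * pi" "of_int i * pi \<le> 2 * pi" by auto
  then have "0 \<le> i" "i \<le> 2" using pi_gt_zero
    by (simp_all add: zero_le_mult_iff mult_le_cancel_right)
  then have "i \<in> {0,1,2}" by auto
  with i show ?thesis by auto
qed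

lemma coeff_zero:
  assumes k: "k \<ge> 0" and S: "finite S"
    and z: "ip k (\<lambda>x. \<Sum>m\<in>S. c m * exp (\<i> * of_int m * of_real x))
                 (\<lambda>x. \<Sum>m\<in>S. c m * exp (\<i> * of_int m * of_real x)) = 0"
    and m: "m \<in> S"
  shows "c m = 0"
proof -
  define P where "P = (\<lambda>x::real. \<Sum>m\<in>S. c m * exp (\<i> * of_int m * of_real x))"
  have cP: "continuous_on A P" for A unfolding P_def by (intro continuous_intros)
  define r where "r = (\<lambda>x. (cmod (P x))^2 * delta k x)"
  have cr: "continuous_on {0..2*pi} r" unfolding r_def
    by (intro continuous_intros cP cont_delta k)
  have hr: "(\<lambda>x. P x * cnj (P x) * complex_of_real (delta k x)) = (\<lambda>x. of_real (r x))"
    unfolding r_def by (auto simp: complex_norm_square[symmetric])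
  have "(r has_integral integral {0..2*pi} r) {0..2*pi}"
    using cr by (intro integrable_integral integrable_continuous_interval)
  from has_integral_of_real[OF this, where 'b=complex]
  have "((\<lambda>x. of_real (r x)::complex) has_integral of_real (integral {0..2*pi} r)) {0..2*pi}" .
  moreover have "integral {0..2*pi} (\<lambda>x. of_real (r x)::complex) = 0"
    using z unfolding ip_def P_def[symmetric] hr by simp
  ultimately have "(complex_of_real (integral {0..2*pi} r)) = 0"
    using integral_unique by metis
  then have "(r has_integral 0) {0..2*pi}"
    using cr by (simp add: integrable_continuous_interval has_integral_integrable_integral)
  then have r0: "r x = 0" if "x \<in> {0..2*pi}" for x
    using has_integral_0_cbox_imp_0[of 0 "2*pi" r x] cr that pi_gt_zero
    by (auto simp: delta_nonneg r_def[symmetric]) (auto simp: r_def delta_nonneg)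
  have P0: "P x = 0" if "x \<in> {0..2*pi} - {0, pi, 2*pi}" for x
  proof -
    from that have "sin x \<noteq> 0" using sin_zero_in by auto
    then have "delta k x > 0" by (rule delta_pos)
    with r0[of x] that show ?thesis by (auto simp: r_def)
  qed
  have "integral {0..2*pi} (\<lambda>x. P x * exp (\<i> * of_int (-m) * of_real x)) = 0"
  proof -
    have "((\<lambda>x. P x * exp (\<i> * of_int (-m) * of_real x)) has_integral 0) {0..2*pi}"
      by (rule has_integral_spike_finite[of "{0, pi, 2*pi}" _ _ "\<lambda>_. 0"]) (auto simp: P0)
    then show ?thesis by (rule integral_unique)
  qed
  moreover have "integral {0..2*pi} (\<lambda>x. P x * exp (\<i> * of_int (-m) * of_real x))
      = (\<Sum>l\<in>S. c l * integral {0..2*pi} (\<lambda>x. exp (\<i> * of_int (l - m) * of_real x)))"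
  proof -
    have e: "P x * exp (\<i> * of_int (-m) * of_real x) =
        (\<Sum>l\<in>S. c l * exp (\<i> * of_int (l - m) * of_real x))" for x
      unfolding P_def sum_distrib_right
      by (intro sum.cong refl) (simp add: mult.assoc exp_add[symmetric] algebra_simps)
    show ?thesis unfolding e
      by (subst integral_sum) (auto intro!: integrable_continuous_interval continuous_intros S)
  qed
  moreover have "(\<Sum>l\<in>S. c l * integral {0..2*pi} (\<lambda>x. exp (\<i> * of_int (l - m) * of_real x)))
      = c m * (2*pi)"
    unfolding int_exp using S m by (simp add: if_distrib cong: if_cong)
  ultimately show ?thesis by simp
qed



lemma sum_fun_apply: "finite S \<Longrightarrow> (\<Sum>t\<in>S. f t) x = (\<Sum>t\<in>S. f t x)"
  by (induction S rule: finite_induct) auto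

lemma solve_sq:
  fixes G :: "'a \<Rightarrow> 'a \<Rightarrow> complex"
  assumes T: "finite T"
    and inj: "\<And>a. (\<forall>j\<in>T. (\<Sum>m\<in>T. a m * G m j) = 0) \<Longrightarrow> \<forall>m\<in>T. a m = 0"
  shows "\<exists>a. \<forall>j\<in>T. (\<Sum>m\<in>T. a m * G m j) = b j"
proof -
  define sc where "sc = (\<lambda>(r::complex) (f::'a\<Rightarrow>complex). (\<lambda>x. r * f x))"
  interpret V: vector_space sc
    by unfold_locales (auto simp: sc_def fun_eq_iff algebra_simps)
  define L where "L = (\<lambda>a j. if j \<in> T then (\<Sum>m\<in>T. a m * G m j) else (0::complex))"
  have lin: "Vector_Spaces.linear sc sc L"
    unfolding Vector_Spaces.linear_iff
    using V.vector_space_axioms unfolding sc_def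
    by (auto simp: L_def sc_def fun_eq_iff sum.distrib
        algebra_simps sum_distrib_left)
  interpret LL: Vector_Spaces.linear sc sc L by (rule lin)
  define VV where "VV = {a::'a\<Rightarrow>complex. \<forall>j. j \<notin> T \<longrightarrow> a j = 0}"
  define dl where "dl = (\<lambda>t::'a. (\<lambda>x. if x = t then 1 else (0::complex)))"
  define E where "E = dl ` T"
  have finE: "finite E" unfolding E_def using T by simp
  have injdl: "inj_on dl T" unfolding dl_def inj_on_def by (auto simp: fun_eq_iff)
  have cardE: "card E = card T" unfolding E_def using injdl by (simp add: card_image)
  have subV: "V.subspace VV"
    unfolding V.subspace_def VV_def by (auto simp: sc_def)
  have EV: "E \<subseteq> VV" unfolding E_def VV_def dl_def by auto
  have spanE: "V.span E \<subseteq> VV" using V.span_minimal[OF EV subV] .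
  have VspanE: "VV \<subseteq> V.span E"
  proof
    fix a assume a: "a \<in> VV"
    have "a = (\<Sum>t\<in>T. sc (a t) (dl t))"
    proof
      fix x
      show "a x = (\<Sum>t\<in>T. sc (a t) (dl t)) x"
        using a T by (auto simp: sum_fun_apply sc_def dl_def VV_def if_distrib cong: if_cong)
    qed
    also have "\<dots> \<in> V.span E"
      by (intro V.span_sum V.span_scale V.span_base) (auto simp: E_def)
    finally show "a \<in> V.span E" .
  qed
  have indE: "V.independent E"
  proof (rule V.independent_if_scalars_zero[OF finE])
    fix f x assume s: "(\<Sum>x\<in>E. sc (f x) x) = 0" and x: "x \<in> E"
    then obtain t where t: "t \<in> T" "x = dl t" unfolding E_def by auto
    have "0 = (\<Sum>y\<in>E. sc (f y) y) t" using s by simp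
    also have "\<dots> = (\<Sum>y\<in>E. f y * y t)" using finE by (simp add: sum_fun_apply sc_def)
    also have "\<dots> = f x * x t"
      by (rule sum.remove[OF finE x, THEN trans]) 
         (auto simp: E_def dl_def t intro!: sum.neutral split: if_splits)
    also have "\<dots> = f x" using t by (simp add: dl_def)
    finally show "f x = 0" by simp
  qed
  have injV: "inj_on L VV"
  proof (rule inj_onI)
    fix a a' assume aV: "a \<in> VV" "a' \<in> VV" and eq: "L a = L a'"
    have "\<forall>j\<in>T. (\<Sum>m\<in>T. (a m - a' m) * G m j) = 0"
    proof
      fix j assume j: "j \<in> T"
      from eq have "L a j = L a' j" by simp
      with j show "(\<Sum>m\<in>T. (a m - a' m) * G m j) = 0"
        by (simp add: L_def algebra_simps sum_subtractf)
    qed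
    from inj[OF this] aV show "a = a'" by (auto simp: VV_def fun_eq_iff)
  qed
  have indLE: "V.independent (L ` E)"
    using LL.independent_injective_image[OF indE] injV spanE inj_on_subset by blast
  have cardLE: "card (L ` E) = card E"
    using injV EV inj_on_subset card_image by metis
  have LEV: "L ` E \<subseteq> VV" unfolding VV_def L_def by auto
  have main: "VV \<subseteq> V.span (L ` E)"
  proof
    fix x assume xV: "x \<in> VV"
    show "x \<in> V.span (L ` E)"
    proof (rule ccontr)
      assume nx: "x \<notin> V.span (L ` E)"
      then have "x \<notin> L ` E" using V.span_base by blast
      have ind2: "V.independent (insert x (L ` E))"
        using V.independent_insertI[OF nx indLE] .
      have "insert x (L ` E) \<subseteq> V.span E" using xV LEV VspanE by blast
      from V.independent_span_bound[OF finE ind2 this]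
      have "card (insert x (L ` E)) \<le> card E" by blast
      moreover have "card (insert x (L ` E)) = card E + 1"
        using \<open>x \<notin> L ` E\<close> finE cardLE by simp
      ultimately show False by simp
    qed
  qed
  define b' where "b' = (\<lambda>j. if j \<in> T then b j else 0)"
  have "b' \<in> VV" unfolding b'_def VV_def by auto
  with main have "b' \<in> L ` V.span E" using LL.span_image by blast
  then obtain a where "b' = L a" by blast
  then have "\<forall>j\<in>T. (\<Sum>m\<in>T. a m * G m j) = b j"
    by (auto simp: b'_def L_def fun_eq_iff) (metis)
  then show ?thesis by blast
qed



lemma tri_shift: "tri_less j (n+1) \<longleftrightarrow> tri_less (1-j) (-n)"
  unfolding tri_less_def
  apply (cases "n \<ge> 0"; cases "j \<ge> 1")
  apply (auto simp: abs_if algebra_simps)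
  apply presburger+
  done

lemma tri_le: "tri_less j n \<Longrightarrow> \<bar>j\<bar> \<le> \<bar>n\<bar>"
  unfolding tri_less_def by auto

lemma tri_irrefl: "\<not> tri_less n n"
  unfolding tri_less_def by auto

lemma finite_supp: "finite (supp_set n)"
proof -
  have "supp_set n \<subseteq> {-\<bar>n\<bar>..\<bar>n\<bar>}" unfolding supp_set_def using tri_le by fastforce
  then show ?thesis by (rule finite_subset) simp
qed

lemma supp_shift: "supp_set (n+1) = (\<lambda>m. 1 - m) ` supp_set (-n)"
proof -
  have "j \<in> supp_set (n+1) \<longleftrightarrow> 1 - j \<in> supp_set (-n)" for j
    unfolding supp_set_def using tri_shift by auto
  then show ?thesis
    by (auto intro!: image_eqI[where x="1 - _"])
qed



definition G :: "real \<Rightarrow> int \<Rightarrow> int \<Rightarrow> complex" where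
  "G k m j = ip k (\<lambda>x. exp (\<i> * of_int m * of_real x)) (\<lambda>x. exp (\<i> * of_int j * of_real x))"

lemma ipP:
  assumes "k \<ge> 0" "finite S"
  shows "ip k (\<lambda>x. \<Sum>m\<in>S. c m * exp (\<i> * of_int m * of_real x)) (\<lambda>x. exp (\<i> * of_int j * of_real x))
       = (\<Sum>m\<in>S. c m * G k m j)"
  unfolding G_def
  by (rule ip_sum_left[where f = "\<lambda>m x. exp (\<i> * of_int m * of_real x)"])
     (auto intro!: continuous_intros assms)

lemma G_inj:
  assumes k: "k \<ge> 0" and S: "finite S"
    and h: "\<forall>j\<in>S. (\<Sum>m\<in>S. a m * G k m j) = 0"
  shows "\<forall>m\<in>S. a m = 0"
proof
  fix m assume m: "m \<in> S"
  let ?P = "\<lambda>x. \<Sum>m\<in>S. a m * exp (\<i> * of_int m * of_real x)"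
  have "ip k ?P ?P = (\<Sum>j\<in>S. cnj (a j) * ip k ?P (\<lambda>x. exp (\<i> * of_int j * of_real x)))"
    by (rule ip_sum_right[where g = "\<lambda>m x. exp (\<i> * of_int m * of_real x)"])
       (auto intro!: continuous_intros k S)
  also have "\<dots> = 0" using h by (simp add: ipP[OF k S])
  finally show "a m = 0" using coeff_zero[OF k S _ m] by blast
qed

lemma HO_unique:
  assumes k: "k \<ge> 0" and c: "HO_coeffs k n c" and d: "HO_coeffs k n d"
  shows "c = d"
proof -
  define T where "T = {j. tri_less j n}"
  have suppT: "supp_set n = insert n T" "n \<notin> T" unfolding T_def supp_set_def
    by (auto simp: tri_irrefl)
  have finT: "finite T" using finite_supp[of n] suppT by auto
  have "\<forall>j\<in>T. (\<Sum>m\<in>T. (c m - d m) * G k m j) = 0"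
  proof
    fix j assume j: "j \<in> T"
    have "0 = (\<Sum>m\<in>supp_set n. c m * G k m j) - (\<Sum>m\<in>supp_set n. d m * G k m j)"
      using c d j unfolding HO_coeffs_def T_def by (simp add: ipP[OF k finite_supp])
    also have "\<dots> = (\<Sum>m\<in>T. (c m - d m) * G k m j)"
      using c d suppT finT unfolding HO_coeffs_def
      by (simp add: sum_subtractf algebra_simps)
    finally show "(\<Sum>m\<in>T. (c m - d m) * G k m j) = 0" by simp
  qed
  from G_inj[OF k finT this] have "\<forall>m\<in>T. c m = d m" by simp
  with c d suppT show "c = d" unfolding HO_coeffs_def by (auto simp: fun_eq_iff) metis
qed

lemma HO_exists:
  assumes k: "k \<ge> 0"
  shows "\<exists>c. HO_coeffs k n c"
proof -
  define T where "T = {j. tri_less j n}"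
  have suppT: "supp_set n = insert n T" "n \<notin> T" unfolding T_def supp_set_def
    by (auto simp: tri_irrefl)
  have finT: "finite T" using finite_supp[of n] suppT by auto
  obtain a where a: "\<forall>j\<in>T. (\<Sum>m\<in>T. a m * G k m j) = - G k n j"
    using solve_sq[OF finT, of "G k" "\<lambda>j. - G k n j"] G_inj[OF k finT] by blast
  define c where "c = (\<lambda>j. if j = n then 1 else if j \<in> T then a j else 0)"
  have "HO_coeffs k n c"
    unfolding HO_coeffs_def
  proof (intro conjI allI impI)
    show "c n = 1" by (simp add: c_def)
    fix j
    show "j \<notin> supp_set n \<Longrightarrow> c j = 0" using suppT by (auto simp: c_def)
    assume j: "tri_less j n"
    have "ip k (\<lambda>x. \<Sum>m\<in>supp_set n. c m * exp (\<i> * of_int m * of_real x))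
         (\<lambda>x. exp (\<i> * of_int j * of_real x)) = (\<Sum>m\<in>supp_set n. c m * G k m j)"
      by (rule ipP[OF k finite_supp])
    also have "\<dots> = G k n j + (\<Sum>m\<in>T. a m * G k m j)"
      using suppT finT by (simp add: c_def cong: sum.cong) (intro sum.cong, auto)
    also have "\<dots> = 0" using a j by (simp add: T_def)
    finally show "ip k (\<lambda>x. \<Sum>m\<in>supp_set n. c m * exp (\<i> * of_int m * of_real x))
         (\<lambda>x. exp (\<i> * of_int j * of_real x)) = 0" .
  qed
  then show ?thesis by blast
qed

lemma HO_ex1: "k \<ge> 0 \<Longrightarrow> \<exists>!c. HO_coeffs k n c"
  using HO_exists HO_unique by blast



lemma Gform: "G k m j = 1 / (2*pi) * integral {0..2*pi}
    (\<lambda>x. exp (\<i> * of_int (m - j) * of_real x) * complex_of_real (delta k x))"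
proof -
  have "exp (\<i> * of_int m * of_real x) * cnj (exp (\<i> * of_int j * of_real x))
        = exp (\<i> * of_int (m - j) * of_real x)" for x :: real
    by (simp add: exp_cnj exp_add[symmetric] algebra_simps)
  then show ?thesis unfolding G_def ip_def by simp
qed

lemma int_sym: "integral {0..2*pi} (\<lambda>x. exp (\<i> * of_int l * of_real x) * complex_of_real (delta k x))
   = integral {0..2*pi} (\<lambda>x. exp (\<i> * of_int (-l) * of_real x) * complex_of_real (delta k x))"
proof -
  have "exp (\<i> * of_int (-l) * of_real (2*pi - x)) * complex_of_real (delta k (2*pi - x))
     = exp (\<i> * of_int l * of_real x) * complex_of_real (delta k x)" for x
  proof -
    have "exp (\<i> * of_int (-l) * of_real (2*pi - x)) = exp (\<i> * of_int l * of_real x) * exp (of_real (2 * of_int (-l) * pi) * \<i>)"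
      by (simp add: exp_add[symmetric] algebra_simps)
    also have "exp (of_real (2 * of_int (-l) * pi) * \<i>) = 1"
      using exp_integer_2pi[of "of_int (-l)"] by simp
    finally show ?thesis by (simp add: delta_refl)
  qed
  then show ?thesis
    using integral_refl2pi[of "\<lambda>x. exp (\<i> * of_int (-l) * of_real x) * complex_of_real (delta k x)"]
    by simp
qed

lemma Gsym: "G k (1 - m) j = G k m (1 - j)"
  unfolding Gform using int_sym[of "1 - m - j" k] by (simp add: algebra_simps)

lemma orth_shift:
  assumes k: "k \<ge> 0"
  shows "ip k (\<lambda>x. \<Sum>m\<in>supp_set (n+1). c (1 - m) * exp (\<i> * of_int m * of_real x)) (\<lambda>x. exp (\<i> * of_int j * of_real x))
       = ip k (\<lambda>x. \<Sum>m\<in>supp_set (-n). c m * exp (\<i> * of_int m * of_real x)) (\<lambda>x. exp (\<i> * of_int (1 - j) * of_real x))"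
proof -
  have inj: "inj_on (\<lambda>m::int. 1 - m) A" for A by (auto simp: inj_on_def)
  have "(\<Sum>m\<in>supp_set (n+1). c (1 - m) * G k m j) = (\<Sum>m\<in>supp_set (-n). c m * G k m (1 - j))"
    unfolding supp_shift by (subst sum.reindex[OF inj]) (simp add: o_def Gsym[symmetric])
  then show ?thesis unfolding ipP[OF k finite_supp] .
qed

theorem mainTheorem2:
  fixes k :: real and n :: int and x :: real
  assumes "k \<ge> 0"
  shows "HO_E k (n + 1) x = exp (of_real x) * HO_E k (- n) (- x)"
proof -
  note k = assms
  obtain c where c: "HO_coeffs k (-n) c" using HO_exists[OF k] by blast
  have c': "HO_coeffs k (n+1) (\<lambda>j. c (1 - j))"
    unfolding HO_coeffs_def
  proof (intro conjI allI impI)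
    show "c (1 - (n + 1)) = 1" using c by (simp add: HO_coeffs_def)
    fix j
    show "j \<notin> supp_set (n + 1) \<Longrightarrow> c (1 - j) = 0"
    proof -
      assume "j \<notin> supp_set (n + 1)"
      then have "1 - j \<notin> supp_set (-n)"
        unfolding supp_shift by (auto intro: image_eqI[where x="1 - j"])
      then show ?thesis using c unfolding HO_coeffs_def by blast
    qed
    assume "tri_less j (n + 1)"
    then have "tri_less (1 - j) (-n)" using tri_shift by simp
    then show "ip k (\<lambda>x. \<Sum>m\<in>supp_set (n + 1). c (1 - m) * exp (\<i> * of_int m * of_real x))
          (\<lambda>x. exp (\<i> * of_int j * of_real x)) = 0"
      using c unfolding orth_shift[OF k] HO_coeffs_def by blast
  qed
  have T1: "(THE c. HO_coeffs k (-n) c) = c" using HO_ex1[OF k, of "-n"] c by (simp add: the1_equality)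
  have T2: "(THE c. HO_coeffs k (n+1) c) = (\<lambda>j. c (1 - j))" using HO_ex1[OF k, of "n+1"] c' by (simp add: the1_equality)
  have inj: "inj_on (\<lambda>m::int. 1 - m) A" for A by (auto simp: inj_on_def)
  have "HO_E k (n + 1) x = (\<Sum>m\<in>supp_set (n+1). c (1 - m) * exp (of_int m * of_real x))"
    unfolding HO_E_def T2 ..
  also have "\<dots> = (\<Sum>m\<in>supp_set (-n). c m * exp (of_int (1 - m) * of_real x))"
    unfolding supp_shift by (subst sum.reindex[OF inj]) (simp add: o_def)
  also have "\<dots> = exp (of_real x) * (\<Sum>m\<in>supp_set (-n). c m * exp (of_int m * of_real (-x)))"
    unfolding sum_distrib_left
    by (intro sum.cong refl) (simp add: exp_add[symmetric] algebra_simps exp_diff)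
  also have "\<dots> = exp (of_real x) * HO_E k (- n) (- x)"
    unfolding HO_E_def T1 ..
  finally show ?thesis .
qed

end
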